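(* Let $n\ge 2$, $k\ge 0$ and $\nu_1,\ldots,\nu_n>0$. The set of polynomials \[ \psi_{j_1,\ldots,j_{n-1}} = CK_{n}\Big( \big(K_+^{[n-1]}\big)^{j_{n-1}} CK_{n-1}\Big( \cdots \big(K_+^{[3]}\big)^{j_3} CK_{3}\Big( \big(K_+^{[2]}\big)^{j_2} CK_{2}\big( x_1^{j_1}\big)\Big)\cdots\Big)\Big), \] where $(j_1,\ldots,j_{n-1})$ ranges over all tuples of nonnegative integers with $\sum_{\ell=1}^{n-1} j_\ell = k$, is a basis of $\mathcal{H}_k(\mathbb{R}^n)$.
   Context: For $m\ge 1$, $\mathcal{P}_k(\mathbb{R}^m)$ denotes the space of real homogeneous polynomials of degree $k$ in $x_1,\ldots,x_m$. For $m\le n$, $K_+^{[m]}=\sum_{j=1}^m (x_j^2\partial_{x_j}+2\nu_j x_j)$ and $K_-^{[m]}=\sum_{j=1}^m\partial_{x_j}$, acting on polynomials in $x_1,\ldots,x_m$. $\mathcal{H}_k(\mathbb{R}^n)=\mathcal{P}_k(\mathbb{R}^n)\cap\ker K_-^{[n]}$. For $2\le m\le n$, $CK_m$ is the map sending a polynomial $p(x_1,\ldots,x_{m-1})$ to $p(x_1-x_m,\ldots,x_{m-1}-x_m)$. *)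

theory Defs
  imports Complex_Main "HOL-Library.Poly_Mapping"
begin

text \<open>Real polynomials in the variables x_1, x_2, ... : finitely supported maps from
  exponent vectors (variable index i :: nat mapped to its exponent) to real coefficients.
  Variable x_i has index i (1-based).\<close>
type_synonym rpoly = "(nat \<Rightarrow>\<^sub>0 nat) \<Rightarrow>\<^sub>0 real"

definition pvar :: "nat \<Rightarrow> rpoly" where
  "pvar i = Poly_Mapping.single (Poly_Mapping.single i 1) 1"

definition pconst :: "real \<Rightarrow> rpoly" where
  "pconst c = Poly_Mapping.single 0 c"

definition pscale :: "real \<Rightarrow> rpoly \<Rightarrow> rpoly" where
  "pscale c p = Poly_Mapping.map (\<lambda>a. c * a) p"

definition mdeg :: "(nat \<Rightarrow>\<^sub>0 nat) \<Rightarrow> nat" where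
  "mdeg a = (\<Sum>i\<in>Poly_Mapping.keys a. Poly_Mapping.lookup a i)"

definition pderiv_var :: "nat \<Rightarrow> rpoly \<Rightarrow> rpoly" where
  "pderiv_var j p = (\<Sum>a\<in>Poly_Mapping.keys p.
      Poly_Mapping.single (Poly_Mapping.update j (Poly_Mapping.lookup a j - 1) a)
        (of_nat (Poly_Mapping.lookup a j) * Poly_Mapping.lookup p a))"

definition psubst :: "(nat \<Rightarrow> rpoly) \<Rightarrow> rpoly \<Rightarrow> rpoly" where
  "psubst \<sigma> p = (\<Sum>a\<in>Poly_Mapping.keys p. pconst (Poly_Mapping.lookup p a) * (\<Prod>i\<in>Poly_Mapping.keys a. (\<sigma> i) ^ (Poly_Mapping.lookup a i)))"

definition hom_polys :: "nat \<Rightarrow> nat \<Rightarrow> rpoly set" where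
  "hom_polys m k = {p. \<forall>a\<in>Poly_Mapping.keys p. Poly_Mapping.keys a \<subseteq> {1..m} \<and> mdeg a = k}"

definition Kplus :: "(nat \<Rightarrow> real) \<Rightarrow> nat \<Rightarrow> rpoly \<Rightarrow> rpoly" where
  "Kplus \<nu> m p = (\<Sum>j=1..m. pvar j ^ 2 * pderiv_var j p + pconst (2 * \<nu> j) * pvar j * p)"

definition Kminus :: "nat \<Rightarrow> rpoly \<Rightarrow> rpoly" where
  "Kminus m p = (\<Sum>j=1..m. pderiv_var j p)"

definition harm :: "nat \<Rightarrow> nat \<Rightarrow> rpoly set" where
  "harm n k = {p \<in> hom_polys n k. Kminus n p = 0}"

definition CK :: "nat \<Rightarrow> rpoly \<Rightarrow> rpoly" where
  "CK m p = psubst (\<lambda>i. if 1 \<le> i \<and> i \<le> m - 1 then pvar i - pvar m else pvar i) p"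

text \<open>For js = [j_1,...,j_{n-1}]:
  stage js 0 = x_1^{j_1},
  stage js r = (K_+^{[r+1]})^{j_{r+1}} (CK_{r+1} (stage js (r-1))) for r \<ge> 1.\<close>
fun stage :: "(nat \<Rightarrow> real) \<Rightarrow> nat list \<Rightarrow> nat \<Rightarrow> rpoly" where
  "stage \<nu> js 0 = pvar 1 ^ (js ! 0)"
| "stage \<nu> js (Suc r) = (Kplus \<nu> (r + 2) ^^ (js ! (r + 1))) (CK (r + 2) (stage \<nu> js r))"

definition psi :: "(nat \<Rightarrow> real) \<Rightarrow> nat \<Rightarrow> nat list \<Rightarrow> rpoly" where
  "psi \<nu> n js = CK n (stage \<nu> js (n - 2))"

end

theory Submission
  imports Defs
begin

abbreviation (input) lookup :: "('a \<Rightarrow>\<^sub>0 'b::zero) \<Rightarrow> 'a \<Rightarrow> 'b" where "lookup \<equiv> Poly_Mapping.lookup"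
abbreviation (input) keys :: "('a \<Rightarrow>\<^sub>0 'b::zero) \<Rightarrow> 'a set" where "keys \<equiv> Poly_Mapping.keys"
abbreviation (input) single :: "'a \<Rightarrow> 'b \<Rightarrow> ('a \<Rightarrow>\<^sub>0 'b::zero)" where "single \<equiv> Poly_Mapping.single"
abbreviation (input) update :: "'a \<Rightarrow> 'b \<Rightarrow> ('a \<Rightarrow>\<^sub>0 'b::zero) \<Rightarrow> ('a \<Rightarrow>\<^sub>0 'b)" where "update \<equiv> Poly_Mapping.update"

lemma pscale_eq: "pscale c p = pconst c * p"
  by (simp add: pscale_def pconst_def mult_map_scale_conv_mult)

lemma pconst_add: "pconst (a + b) = pconst a + pconst b"
  by (simp add: pconst_def single_add)

lemma pconst_mult: "pconst (a * b) = pconst a * pconst b"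
  by (simp add: pconst_def mult_single)

lemma pconst_1 [simp]: "pconst 1 = 1"
  by (simp add: pconst_def)

lemma pconst_0 [simp]: "pconst 0 = 0"
  by (simp add: pconst_def)

lemma pconst_eq_0_iff [simp]: "pconst c = 0 \<longleftrightarrow> c = 0"
proof
  assume "pconst c = 0"
  then have "lookup (pconst c) 0 = 0" by simp
  then show "c = 0" by (simp add: pconst_def)
qed simp

lemma pconst_uminus: "pconst (- a) = - pconst a"
  by (simp add: pconst_def single_uminus)

lemma pconst_diff: "pconst (a - b) = pconst a - pconst b"
  by (simp add: pconst_def single_diff)

lemma lookup_pconst_mult: "lookup (pconst c * p) a = c * lookup p a"
  by (simp add: pconst_def flip: mult_map_scale_conv_mult) (simp add: map.rep_eq when_def)

lemma keys_pconst_mult: "keys (pconst c * p) \<subseteq> keys p"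
  by (auto simp: in_keys_iff lookup_pconst_mult)

lemma pconst_mult_eq0: "pconst c * p = 0 \<longleftrightarrow> c = 0 \<or> p = 0"
proof
  assume h: "pconst c * p = 0"
  show "c = 0 \<or> p = 0"
  proof (rule ccontr)
    assume "\<not> (c = 0 \<or> p = 0)"
    then obtain a where "lookup p a \<noteq> 0" "c \<noteq> 0"
      by (metis poly_mapping_eqI lookup_zero)
    moreover have "lookup (pconst c * p) a = c * lookup p a" by (rule lookup_pconst_mult)
    ultimately have "lookup (pconst c * p) a \<noteq> 0" by simp
    then show False unfolding h by simp
  qed
next
  assume "c = 0 \<or> p = 0"
  then show "pconst c * p = 0" by auto
qed

lemma pconst_mult_single: "pconst c * single a d = single a (c * d)"
  by (simp add: pconst_def mult_single)

lemma single_pconst_mult: "single a d * pconst c = single a (d * c)"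
  by (simp add: pconst_def mult_single)

lemma poly_expand_superset:
  assumes "finite S" "keys p \<subseteq> S"
  shows "p = (\<Sum>a\<in>S. single a (lookup p a))"
proof (rule poly_mapping_eqI)
  fix k
  have "lookup (\<Sum>a\<in>S. single a (lookup p a)) k = (\<Sum>a\<in>S. (lookup p a when a = k))"
    by (simp add: lookup_sum lookup_single)
  also have "\<dots> = (\<Sum>a\<in>S. if a = k then lookup p k else 0)"
    by (intro sum.cong) (auto simp: when_def)
  also have "\<dots> = lookup p k"
    using assms by (auto simp: in_keys_iff)
  finally show "lookup p k = lookup (\<Sum>a\<in>S. single a (lookup p a)) k" by simp
qed

lemma poly_expand: "p = (\<Sum>a\<in>keys p. single a (lookup p a))"
  by (rule poly_expand_superset) auto

lemma pvar_power: "pvar i ^ n = single (single i n) 1"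
proof (induction n)
  case 0
  then show ?case by simp
next
  case (Suc n)
  then show ?case by (simp add: pvar_def mult_single single_add[symmetric])
qed


section \<open>Monomials and substitution\<close>

definition pmono :: "(nat \<Rightarrow> rpoly) \<Rightarrow> (nat \<Rightarrow>\<^sub>0 nat) \<Rightarrow> rpoly" where
  "pmono \<sigma> a = (\<Prod>i\<in>keys a. \<sigma> i ^ lookup a i)"

lemma pmono_superset:
  assumes "finite S" "keys a \<subseteq> S"
  shows "pmono \<sigma> a = (\<Prod>i\<in>S. \<sigma> i ^ lookup a i)"
  unfolding pmono_def using assms
  by (intro prod.mono_neutral_left) (auto simp: in_keys_iff)

lemma keys_add_nat: "keys (a + b) = keys a \<union> keys (b :: nat \<Rightarrow>\<^sub>0 nat)"
  by (auto simp: in_keys_iff lookup_add)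

lemma pmono_add: "pmono \<sigma> (a + b) = pmono \<sigma> a * pmono \<sigma> b"
proof -
  let ?S = "keys a \<union> keys b"
  have "pmono \<sigma> (a + b) = (\<Prod>i\<in>?S. \<sigma> i ^ lookup (a + b) i)"
    by (rule pmono_superset) (auto simp: keys_add_nat)
  also have "\<dots> = (\<Prod>i\<in>?S. \<sigma> i ^ lookup a i * \<sigma> i ^ lookup b i)"
    by (simp add: lookup_add power_add)
  also have "\<dots> = (\<Prod>i\<in>?S. \<sigma> i ^ lookup a i) * (\<Prod>i\<in>?S. \<sigma> i ^ lookup b i)"
    by (rule prod.distrib)
  also have "\<dots> = pmono \<sigma> a * pmono \<sigma> b"
    by (subst (1 2) pmono_superset[where S = ?S]) auto
  finally show ?thesis .
qed

lemma pmono_zero [simp]: "pmono \<sigma> 0 = 1"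
  by (simp add: pmono_def)

lemma pmono_single: "pmono \<sigma> (single i n) = \<sigma> i ^ n"
  by (cases "n = 0") (simp_all add: pmono_def)

lemma update_as_add: "i \<notin> keys f \<Longrightarrow> update i v f = f + single i v"
  by (rule poly_mapping_eqI) (auto simp: lookup_update lookup_add lookup_single when_def in_keys_iff)

lemma pmono_pvar: "pmono pvar a = single a 1"
proof (induction a rule: update_induct)
  case const
  then show ?case by simp
next
  case (update f a b)
  then show ?case
    by (simp add: update_as_add pmono_add pmono_single pvar_power mult_single)
qed

lemma single_eq_pmono: "single a c = pconst c * pmono pvar a"
  by (simp add: pmono_pvar pconst_mult_single)

lemma psubst_alt: "psubst \<sigma> p = (\<Sum>a\<in>keys p. pconst (lookup p a) * pmono \<sigma> a)"
  by (simp add: psubst_def pmono_def)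

lemma psubst_superset:
  assumes "finite S" "keys p \<subseteq> S"
  shows "psubst \<sigma> p = (\<Sum>a\<in>S. pconst (lookup p a) * pmono \<sigma> a)"
  unfolding psubst_alt using assms
  by (intro sum.mono_neutral_left) (auto simp: in_keys_iff)

lemma psubst_add: "psubst \<sigma> (p + q) = psubst \<sigma> p + psubst \<sigma> q"
proof -
  let ?S = "keys p \<union> keys q"
  have "psubst \<sigma> (p + q) = (\<Sum>a\<in>?S. pconst (lookup (p + q) a) * pmono \<sigma> a)"
    by (rule psubst_superset) (auto dest: subsetD[OF keys_add])
  also have "\<dots> = (\<Sum>a\<in>?S. pconst (lookup p a) * pmono \<sigma> a) + (\<Sum>a\<in>?S. pconst (lookup q a) * pmono \<sigma> a)"
    by (simp add: lookup_add pconst_add distrib_right sum.distrib)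
  also have "\<dots> = psubst \<sigma> p + psubst \<sigma> q"
    by (subst (1 2) psubst_superset[where S = ?S]) auto
  finally show ?thesis .
qed

interpretation psubst: additive "psubst \<sigma>" for \<sigma>
  by standard (rule psubst_add)

lemma psubst_single: "psubst \<sigma> (single a c) = pconst c * pmono \<sigma> a"
  by (subst psubst_superset[where S = "{a}"]) auto

lemma psubst_pconst_mult: "psubst \<sigma> (pconst c * p) = pconst c * psubst \<sigma> p"
proof -
  have "psubst \<sigma> (pconst c * p) = (\<Sum>a\<in>keys p. pconst (lookup (pconst c * p) a) * pmono \<sigma> a)"
    by (rule psubst_superset) (auto simp: keys_pconst_mult)
  also have "\<dots> = pconst c * psubst \<sigma> p"
    by (simp add: psubst_alt lookup_pconst_mult pconst_mult sum_distrib_left mult.assoc)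
  finally show ?thesis .
qed

lemma mult_expand: "p * q = (\<Sum>a\<in>keys p. \<Sum>b\<in>keys q. single (a + b) (lookup p a * lookup q b))"
proof -
  have e1: "(\<Sum>a\<in>keys p. single a (lookup p a)) = p" by (rule poly_expand[symmetric])
  have e2: "(\<Sum>b\<in>keys q. single b (lookup q b)) = q" by (rule poly_expand[symmetric])
  have "p * q = (\<Sum>a\<in>keys p. single a (lookup p a)) * (\<Sum>b\<in>keys q. single b (lookup q b))"
    by (simp only: e1 e2)
  also have "\<dots> = (\<Sum>a\<in>keys p. \<Sum>b\<in>keys q. single a (lookup p a) * single b (lookup q b))"
    by (rule sum_product)
  finally show ?thesis by (simp add: mult_single)
qed

lemma psubst_mult: "psubst \<sigma> (p * q) = psubst \<sigma> p * psubst \<sigma> q"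
proof -
  have "psubst \<sigma> (p * q) = (\<Sum>a\<in>keys p. \<Sum>b\<in>keys q. pconst (lookup p a * lookup q b) * pmono \<sigma> (a + b))"
    by (simp add: mult_expand psubst.sum psubst_single)
  also have "\<dots> = (\<Sum>a\<in>keys p. \<Sum>b\<in>keys q. (pconst (lookup p a) * pmono \<sigma> a) * (pconst (lookup q b) * pmono \<sigma> b))"
    by (simp add: pconst_mult pmono_add algebra_simps)
  also have "\<dots> = psubst \<sigma> p * psubst \<sigma> q"
    by (simp add: psubst_alt sum_product)
  finally show ?thesis .
qed

lemma psubst_1 [simp]: "psubst \<sigma> 1 = 1"
  using psubst_single[of \<sigma> 0 1] by simp

lemma psubst_pconst [simp]: "psubst \<sigma> (pconst c) = pconst c"
  using psubst_single[of \<sigma> 0 c] by (simp add: pconst_def)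

lemma psubst_pvar [simp]: "psubst \<sigma> (pvar i) = \<sigma> i"
  using psubst_single[of \<sigma> "single i 1" 1] by (simp add: pvar_def pmono_single)

lemma psubst_power: "psubst \<sigma> (p ^ n) = psubst \<sigma> p ^ n"
  by (induction n) (simp_all add: psubst_mult)

lemma psubst_prod: "psubst \<sigma> (\<Prod>i\<in>I. f i) = (\<Prod>i\<in>I. psubst \<sigma> (f i))"
  by (induction I rule: infinite_finite_induct) (simp_all add: psubst_mult)

lemma psubst_pmono: "psubst \<tau> (pmono \<sigma> a) = pmono (\<lambda>i. psubst \<tau> (\<sigma> i)) a"
  by (simp add: pmono_def psubst_prod psubst_power)

lemma psubst_comp: "psubst \<tau> (psubst \<sigma> p) = psubst (\<lambda>i. psubst \<tau> (\<sigma> i)) p"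
  by (simp add: psubst_alt[of \<sigma>] psubst_alt[of "\<lambda>i. psubst \<tau> (\<sigma> i)"] psubst.sum psubst_pconst_mult psubst_pmono)

lemma psubst_cong:
  assumes "\<And>a i. a \<in> keys p \<Longrightarrow> i \<in> keys a \<Longrightarrow> \<sigma> i = \<sigma>' i"
  shows "psubst \<sigma> p = psubst \<sigma>' p"
  unfolding psubst_def using assms by (intro sum.cong refl arg_cong2[where f = "(*)"] prod.cong) auto

lemma psubst_pvar_id [simp]: "psubst pvar p = p"
proof -
  have "psubst pvar p = (\<Sum>a\<in>keys p. single a (lookup p a))"
    by (simp add: psubst_alt single_eq_pmono)
  also have "\<dots> = p" by (rule poly_expand[symmetric])
  finally show ?thesis .
qed

section \<open>Partial derivatives\<close>

abbreviation "dn j a \<equiv> update j (lookup a j - 1) a"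

lemma pderiv_superset:
  assumes "finite S" "keys p \<subseteq> S"
  shows "pderiv_var j p = (\<Sum>a\<in>S. single (dn j a) (of_nat (lookup a j) * lookup p a))"
  unfolding pderiv_var_def using assms
  by (intro sum.mono_neutral_left) (auto simp: in_keys_iff)

lemma pderiv_add: "pderiv_var j (p + q) = pderiv_var j p + pderiv_var j q"
proof -
  let ?S = "keys p \<union> keys q"
  have "pderiv_var j (p + q) = (\<Sum>a\<in>?S. single (dn j a) (of_nat (lookup a j) * lookup (p + q) a))"
    by (rule pderiv_superset) (auto dest: subsetD[OF keys_add])
  also have "\<dots> = (\<Sum>a\<in>?S. single (dn j a) (of_nat (lookup a j) * lookup p a))
       + (\<Sum>a\<in>?S. single (dn j a) (of_nat (lookup a j) * lookup q a))"
    by (simp add: lookup_add distrib_left single_add sum.distrib)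
  also have "\<dots> = pderiv_var j p + pderiv_var j q"
    by (subst (1 2) pderiv_superset[where S = ?S]) auto
  finally show ?thesis .
qed

interpretation pderiv: additive "pderiv_var j" for j
  by standard (rule pderiv_add)

lemma pderiv_single: "pderiv_var j (single a c) = single (dn j a) (of_nat (lookup a j) * c)"
  by (subst pderiv_superset[where S = "{a}"]) auto

lemma pderiv_pconst_mult: "pderiv_var j (pconst c * p) = pconst c * pderiv_var j p"
proof -
  have "pderiv_var j (pconst c * p) = (\<Sum>a\<in>keys p. single (dn j a) (of_nat (lookup a j) * lookup (pconst c * p) a))"
    by (rule pderiv_superset) (auto simp: keys_pconst_mult)
  also have "\<dots> = pconst c * pderiv_var j p"
    by (simp add: pderiv_var_def lookup_pconst_mult sum_distrib_left pconst_mult_single) (simp add: algebra_simps)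
  finally show ?thesis .
qed

lemma upd_add:
  fixes a b :: "nat \<Rightarrow>\<^sub>0 nat"
  assumes "1 \<le> lookup a j"
  shows "dn j (a + b) = dn j a + b"
  using assms apply (intro poly_mapping_eqI)
  apply (auto simp: lookup_update lookup_add)
  done

lemma pderiv_single_mult:
  "pderiv_var j (single a c * single b d)
   = pderiv_var j (single a c) * single b d + single a c * pderiv_var j (single b d)"
proof -
  consider "lookup a j = 0" "lookup b j = 0" | "1 \<le> lookup a j" "lookup b j = 0"
    | "lookup a j = 0" "1 \<le> lookup b j" | "1 \<le> lookup a j" "1 \<le> lookup b j"
    by linarith
  then show ?thesis
  proof cases
    case 1
    then show ?thesis by (simp add: mult_single pderiv_single lookup_add)
  next
    case 2
    then show ?thesis using upd_add[of a j b] by (simp add: mult_single pderiv_single lookup_add mult.assoc)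
  next
    case 3
    then show ?thesis using upd_add[of b j a]
      by (simp add: mult_single pderiv_single lookup_add add.commute mult_ac)
  next
    case 4
    let ?X = "update j (lookup a j + lookup b j - 1) (a + b)"
    have e1: "dn j a + b = ?X" using upd_add[of a j b] 4 by (simp add: lookup_add)
    have e2: "a + dn j b = ?X" using upd_add[of b j a] 4 by (simp add: lookup_add add.commute)
    have "pderiv_var j (single a c) * single b d + single a c * pderiv_var j (single b d)
       = single ?X (of_nat (lookup a j) * c * d) + single ?X (c * (of_nat (lookup b j) * d))"
      by (simp only: pderiv_single mult_single e1 e2)
    also have "\<dots> = single ?X (of_nat (lookup (a + b) j) * (c * d))"
      by (simp add: single_add[symmetric] lookup_add algebra_simps)
    also have "\<dots> = pderiv_var j (single a c * single b d)"
      by (simp add: mult_single pderiv_single lookup_add)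
    finally show ?thesis by simp
  qed
qed

lemma pderiv_mult: "pderiv_var j (p * q) = pderiv_var j p * q + p * pderiv_var j q"
proof -
  have e1: "(\<Sum>a\<in>keys p. single a (lookup p a)) = p" by (rule poly_expand[symmetric])
  have e2: "(\<Sum>b\<in>keys q. single b (lookup q b)) = q" by (rule poly_expand[symmetric])
  have "pderiv_var j (p * q) = pderiv_var j ((\<Sum>a\<in>keys p. single a (lookup p a)) * (\<Sum>b\<in>keys q. single b (lookup q b)))"
    by (simp only: e1 e2)
  also have "\<dots> = (\<Sum>a\<in>keys p. \<Sum>b\<in>keys q. pderiv_var j (single a (lookup p a) * single b (lookup q b)))"
    by (simp add: sum_product pderiv.sum)
  also have "\<dots> = (\<Sum>a\<in>keys p. \<Sum>b\<in>keys q. pderiv_var j (single a (lookup p a)) * single b (lookup q b))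
     + (\<Sum>a\<in>keys p. \<Sum>b\<in>keys q. single a (lookup p a) * pderiv_var j (single b (lookup q b)))"
    by (simp add: pderiv_single_mult sum.distrib)
  also have "\<dots> = pderiv_var j (\<Sum>a\<in>keys p. single a (lookup p a)) * (\<Sum>b\<in>keys q. single b (lookup q b))
     + (\<Sum>a\<in>keys p. single a (lookup p a)) * pderiv_var j (\<Sum>b\<in>keys q. single b (lookup q b))"
    by (simp add: sum_product pderiv.sum)
  finally show ?thesis by (simp only: e1 e2)
qed

lemma pderiv_pvar: "pderiv_var j (pvar i) = (if i = j then 1 else 0)"
proof -
  have "update i 0 (single i (1::nat)) = 0"
    by (rule poly_mapping_eqI) (simp add: lookup_update lookup_single when_def)
  then show ?thesis
    by (auto simp: pvar_def pderiv_single lookup_single when_def)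
qed

lemma pderiv_pconst [simp]: "pderiv_var j (pconst c) = 0"
  by (simp add: pconst_def pderiv_single)

lemma pderiv_1 [simp]: "pderiv_var j 1 = 0"
  using pderiv_pconst[of j 1] by simp

lemma pderiv_comm_single: "pderiv_var i (pderiv_var j (single a c)) = pderiv_var j (pderiv_var i (single a c))"
proof (cases "i = j")
  case False
  have "update i (lookup a i - 1) (dn j a) = update j (lookup a j - 1) (dn i a)"
    using False by (intro poly_mapping_eqI) (auto simp: lookup_update)
  then show ?thesis using False by (simp add: pderiv_single lookup_update algebra_simps)
qed simp

lemma pderiv_comm: "pderiv_var i (pderiv_var j p) = pderiv_var j (pderiv_var i p)"
proof -
  have e1: "(\<Sum>a\<in>keys p. single a (lookup p a)) = p" by (rule poly_expand[symmetric])
  have "pderiv_var i (pderiv_var j (\<Sum>a\<in>keys p. single a (lookup p a)))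
      = pderiv_var j (pderiv_var i (\<Sum>a\<in>keys p. single a (lookup p a)))"
    by (simp add: pderiv.sum pderiv_comm_single)
  then show ?thesis by (simp only: e1)
qed

lemma lookup_pderiv: "lookup (pderiv_var j p) b = (of_nat (lookup b j) + 1) * lookup p (b + single j 1)"
proof -
  have "lookup (pderiv_var j p) b = (\<Sum>a\<in>keys p. (of_nat (lookup a j) * lookup p a when dn j a = b))"
    by (simp add: pderiv_var_def lookup_sum lookup_single)
  also have "\<dots> = (\<Sum>a\<in>keys p. if a = b + single j 1 then (of_nat (lookup b j) + 1) * lookup p a else 0)"
  proof (intro sum.cong refl)
    fix a assume "a \<in> keys p"
    show "(of_nat (lookup a j) * lookup p a when dn j a = b)
        = (if a = b + single j 1 then (of_nat (lookup b j) + 1) * lookup p a else 0)"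
    proof (cases "lookup a j = 0")
      case True
      then have "a \<noteq> b + single j 1"
        by (auto simp: lookup_add)
      then show ?thesis using True by (simp add: when_def)
    next
      case False
      have "dn j a = b \<longleftrightarrow> a = b + single j 1"
      proof
        assume "dn j a = b"
        then show "a = b + single j 1" using False
          by (auto intro!: poly_mapping_eqI simp: lookup_add lookup_update lookup_single when_def)
      next
        assume "a = b + single j 1"
        then show "dn j a = b"
          by (auto intro!: poly_mapping_eqI simp: lookup_add lookup_update lookup_single when_def)
      qed
      then show ?thesis using False by (auto simp: when_def lookup_add)
    qed
  qed
  also have "\<dots> = (of_nat (lookup b j) + 1) * lookup p (b + single j 1)"
    by (auto simp: in_keys_iff)
  finally show ?thesis .
qed


section \<open>Degrees and homogeneity\<close>

lemma mdeg_superset: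
  assumes "finite S" "keys a \<subseteq> S"
  shows "mdeg a = (\<Sum>i\<in>S. lookup a i)"
  unfolding mdeg_def using assms
  by (intro sum.mono_neutral_left) (auto simp: in_keys_iff)

lemma mdeg_add: "mdeg (a + b) = mdeg a + mdeg (b :: nat \<Rightarrow>\<^sub>0 nat)"
proof -
  let ?S = "keys a \<union> keys b"
  have "mdeg (a + b) = (\<Sum>i\<in>?S. lookup (a + b) i)"
    by (rule mdeg_superset) (auto simp: keys_add_nat)
  also have "\<dots> = (\<Sum>i\<in>?S. lookup a i) + (\<Sum>i\<in>?S. lookup b i)"
    by (simp add: lookup_add sum.distrib)
  also have "\<dots> = mdeg a + mdeg b"
    by (subst (1 2) mdeg_superset[where S = ?S]) auto
  finally show ?thesis .
qed

lemma mdeg_single [simp]: "mdeg (single i n) = n"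
  by (cases "n = 0") (auto simp: mdeg_def)

lemma mdeg_zero [simp]: "mdeg 0 = 0"
  by (simp add: mdeg_def)

lemma lookup_le_mdeg: "lookup a j \<le> mdeg a"
proof (cases "j \<in> keys a")
  case True
  then show ?thesis unfolding mdeg_def by (intro member_le_sum) auto
next
  case False
  then show ?thesis by (simp add: in_keys_iff)
qed

lemma dn_plus:
  fixes a :: "nat \<Rightarrow>\<^sub>0 nat"
  assumes "1 \<le> lookup a j"
  shows "dn j a + single j 1 = a"
  using assms by (intro poly_mapping_eqI) (auto simp: lookup_add lookup_update lookup_single when_def)

lemma mdeg_dn:
  fixes a :: "nat \<Rightarrow>\<^sub>0 nat"
  assumes "1 \<le> lookup a j"
  shows "mdeg (dn j a) = mdeg a - 1"
proof -
  have "mdeg a = mdeg (dn j a) + 1"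
    using mdeg_add[of "dn j a" "single j 1"] dn_plus[OF assms] by simp
  then show ?thesis by simp
qed

lemma keys_dn: "keys (dn j (a :: nat \<Rightarrow>\<^sub>0 nat)) \<subseteq> keys a"
  by (auto simp: in_keys_iff lookup_update split: if_splits)

lemma homI:
  assumes "\<And>a. a \<in> keys p \<Longrightarrow> keys a \<subseteq> {1..m} \<and> mdeg a = d"
  shows "p \<in> hom_polys m d"
  using assms by (auto simp: hom_polys_def)

lemma homD:
  assumes "p \<in> hom_polys m d" "a \<in> keys p"
  shows "keys a \<subseteq> {1..m}" "mdeg a = d"
  using assms by (auto simp: hom_polys_def)

lemma hom_zero [simp]: "0 \<in> hom_polys m d"
  by (simp add: hom_polys_def)

lemma hom_add:
  assumes "p \<in> hom_polys m d" "q \<in> hom_polys m d"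
  shows "p + q \<in> hom_polys m d"
proof (rule homI)
  fix a assume "a \<in> keys (p + q)"
  then have "a \<in> keys p \<or> a \<in> keys q" using keys_add[of p q] by blast
  then show "keys a \<subseteq> {1..m} \<and> mdeg a = d" using homD[OF assms(1)] homD[OF assms(2)] by blast
qed

lemma hom_pconst_mult:
  assumes "p \<in> hom_polys m d"
  shows "pconst c * p \<in> hom_polys m d"
proof (rule homI)
  fix a assume "a \<in> keys (pconst c * p)"
  then have "a \<in> keys p" using keys_pconst_mult[of c p] by blast
  then show "keys a \<subseteq> {1..m} \<and> mdeg a = d" using homD[OF assms] by blast
qed

lemma keys_uminus': "keys (- p) = keys (p :: rpoly)"
  by (auto simp: in_keys_iff)

lemma hom_uminus: "p \<in> hom_polys m d \<Longrightarrow> - p \<in> hom_polys m d"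
  unfolding hom_polys_def by (simp add: keys_uminus')

lemma hom_diff: "p \<in> hom_polys m d \<Longrightarrow> q \<in> hom_polys m d \<Longrightarrow> p - q \<in> hom_polys m d"
  using hom_add[of p m d "- q"] hom_uminus[of q m d] by simp

lemma hom_sum: "(\<And>i. i \<in> I \<Longrightarrow> f i \<in> hom_polys m d) \<Longrightarrow> sum f I \<in> hom_polys m d"
  by (induction I rule: infinite_finite_induct) (auto intro: hom_add)

lemma hom_single: "keys a \<subseteq> {1..m} \<Longrightarrow> mdeg a = d \<Longrightarrow> single a c \<in> hom_polys m d"
  by (auto simp: hom_polys_def)

lemma hom_mult:
  assumes "p \<in> hom_polys m d1" "q \<in> hom_polys m d2"
  shows "p * q \<in> hom_polys m (d1 + d2)"
proof (rule homI)
  fix c assume "c \<in> keys (p * q)"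
  then obtain a b where ab: "c = a + b" "a \<in> keys p" "b \<in> keys q"
    using keys_mult by blast
  show "keys c \<subseteq> {1..m} \<and> mdeg c = d1 + d2"
    using ab homD[OF assms(1) ab(2)] homD[OF assms(2) ab(3)] by (auto simp: keys_add_nat mdeg_add)
qed

lemma hom_pvar: "1 \<le> i \<Longrightarrow> i \<le> m \<Longrightarrow> pvar i \<in> hom_polys m 1"
  by (auto simp: pvar_def hom_polys_def)

lemma hom_pconst: "pconst c \<in> hom_polys m 0"
  by (auto simp: pconst_def hom_polys_def)

lemma hom_one: "1 \<in> hom_polys m 0"
  using hom_pconst[of 1 m] by simp

lemma hom_power: "p \<in> hom_polys m d \<Longrightarrow> p ^ n \<in> hom_polys m (n * d)"
proof (induction n)
  case 0
  then show ?case by (simp add: hom_one)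
next
  case (Suc n)
  then show ?case using hom_mult[of p m d "p ^ n" "n * d"] by simp
qed

lemma hom_prod: "(\<And>i. i \<in> I \<Longrightarrow> f i \<in> hom_polys m (g i)) \<Longrightarrow> prod f I \<in> hom_polys m (sum g I)"
proof (induction I rule: infinite_finite_induct)
  case (infinite A)
  then show ?case by (simp add: hom_one)
next
  case empty
  then show ?case by (simp add: hom_one)
next
  case (insert x F)
  then show ?case by (simp add: hom_mult)
qed

lemma hom_mono: "m \<le> m' \<Longrightarrow> p \<in> hom_polys m d \<Longrightarrow> p \<in> hom_polys m' d"
  unfolding hom_polys_def by (fastforce simp: subset_iff)

lemma hom_pderiv:
  assumes "p \<in> hom_polys m d"
  shows "pderiv_var j p \<in> hom_polys m (d - 1)"
  unfolding pderiv_var_def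
proof (rule hom_sum)
  fix a assume a: "a \<in> keys p"
  show "single (dn j a) (of_nat (lookup a j) * lookup p a) \<in> hom_polys m (d - 1)"
  proof (cases "lookup a j = 0")
    case True
    then show ?thesis by simp
  next
    case False
    then have "1 \<le> lookup a j" by simp
    from mdeg_dn[OF this] homD(2)[OF assms a] have "mdeg (dn j a) = d - 1" by simp
    then show ?thesis using homD[OF assms a] keys_dn[of j a]
      by (intro hom_single) auto
  qed
qed

lemma hom0_pderiv:
  assumes "p \<in> hom_polys m 0"
  shows "pderiv_var j p = 0"
  unfolding pderiv_var_def
proof (rule sum.neutral, rule ballI)
  fix a assume a: "a \<in> keys p"
  then have "lookup a j = 0" using homD(2)[OF assms a] lookup_le_mdeg[of a j] by simp
  then show "single (dn j a) (of_nat (lookup a j) * lookup p a) = 0" by simp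
qed

lemma hom_pmono:
  assumes "\<And>i. i \<in> keys a \<Longrightarrow> \<sigma> i \<in> hom_polys m' 1"
  shows "pmono \<sigma> a \<in> hom_polys m' (mdeg a)"
proof -
  have "pmono \<sigma> a \<in> hom_polys m' (\<Sum>i\<in>keys a. lookup a i * 1)"
    unfolding pmono_def using assms by (intro hom_prod hom_power) auto
  then show ?thesis by (simp add: mdeg_def)
qed

lemma hom_psubst:
  assumes "\<And>i. 1 \<le> i \<Longrightarrow> i \<le> m \<Longrightarrow> \<sigma> i \<in> hom_polys m' 1" "p \<in> hom_polys m d"
  shows "psubst \<sigma> p \<in> hom_polys m' d"
  unfolding psubst_alt
proof (rule hom_sum)
  fix a assume a: "a \<in> keys p"
  have "pmono \<sigma> a \<in> hom_polys m' (mdeg a)"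
    using homD(1)[OF assms(2) a] by (intro hom_pmono assms(1)) auto
  then show "pconst (lookup p a) * pmono \<sigma> a \<in> hom_polys m' d"
    using homD(2)[OF assms(2) a] by (simp add: hom_pconst_mult)
qed

lemma single_sum: "single a (sum f I) = (\<Sum>i\<in>I. single a (f i))"
  by (induction I rule: infinite_finite_induct) (simp_all add: single_add)

lemma euler_single:
  assumes "keys a \<subseteq> {1..m}" "mdeg a = d"
  shows "(\<Sum>j=1..m. pvar j * pderiv_var j (single a c)) = single a (of_nat d * c)"
proof -
  have t: "pvar j * pderiv_var j (single a c) = single a (of_nat (lookup a j) * c)" for j
  proof (cases "lookup a j = 0")
    case True
    then show ?thesis by (simp add: pderiv_single)
  next
    case False
    then have "single j 1 + dn j a = a" using dn_plus[where a = a and j = j] by (simp add: add.commute)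
    then show ?thesis by (simp add: pderiv_single pvar_def mult_single)
  qed
  have s1: "(\<Sum>j=1..m. pvar j * pderiv_var j (single a c)) = (\<Sum>j=1..m. single a (of_nat (lookup a j) * c))"
    by (rule sum.cong[OF refl t])
  have s2: "(\<Sum>j=1..m. single a (of_nat (lookup a j) * c)) = single a ((\<Sum>j=1..m. of_nat (lookup a j)) * c)"
    by (simp only: single_sum sum_distrib_right)
  have "(\<Sum>j=1..m. lookup a j) = d"
    using assms mdeg_superset[where S = "{1..m}" and a = a] by simp
  then have s3: "(\<Sum>j=1..m. real (lookup a j)) = real d"
    by (metis of_nat_sum)
  show ?thesis by (simp only: s1 s2 s3)
qed

lemma euler:
  assumes "p \<in> hom_polys m d"
  shows "(\<Sum>j=1..m. pvar j * pderiv_var j p) = pconst (of_nat d) * p"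
proof -
  have e1: "(\<Sum>a\<in>keys p. single a (lookup p a)) = p" by (rule poly_expand[symmetric])
  have "(\<Sum>j=1..m. pvar j * pderiv_var j (\<Sum>a\<in>keys p. single a (lookup p a)))
      = (\<Sum>j=1..m. \<Sum>a\<in>keys p. pvar j * pderiv_var j (single a (lookup p a)))"
    by (simp only: pderiv.sum sum_distrib_left)
  also have "\<dots> = (\<Sum>a\<in>keys p. \<Sum>j=1..m. pvar j * pderiv_var j (single a (lookup p a)))"
    by (rule sum.swap)
  also have "\<dots> = (\<Sum>a\<in>keys p. single a (of_nat d * lookup p a))"
    using homD[OF assms] by (intro sum.cong refl euler_single) auto
  also have "\<dots> = pconst (of_nat d) * (\<Sum>a\<in>keys p. single a (lookup p a))"
    by (simp only: sum_distrib_left pconst_mult_single)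
  finally show ?thesis by (simp only: e1)
qed


lemma pconst_numeral: "pconst (numeral n) = numeral n"
  by (simp add: pconst_def)

lemma pconst_of_nat: "pconst (of_nat n) = of_nat n"
  by (simp add: pconst_def)

lemma pconst_sum: "pconst (sum f I) = (\<Sum>i\<in>I. pconst (f i))"
  by (induction I rule: infinite_finite_induct) (simp_all add: pconst_add)

lemma Kplus_add: "Kplus \<nu> m (p + q) = Kplus \<nu> m p + Kplus \<nu> m q"
  by (simp add: Kplus_def pderiv_add sum.distrib[symmetric] algebra_simps)

interpretation Kplus: additive "Kplus \<nu> m" for \<nu> m
  by standard (rule Kplus_add)

lemma Kplus_pconst_mult: "Kplus \<nu> m (pconst c * p) = pconst c * Kplus \<nu> m p"
  by (simp add: Kplus_def pderiv_pconst_mult sum_distrib_left) (simp add: algebra_simps)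

lemma Kpow_add: "(Kplus \<nu> m ^^ j) (p + q) = (Kplus \<nu> m ^^ j) p + (Kplus \<nu> m ^^ j) q"
  by (induction j) (simp_all add: Kplus_add)

interpretation Kpow: additive "Kplus \<nu> m ^^ j" for \<nu> m j
  by standard (rule Kpow_add)

lemma Kpow_pconst_mult: "(Kplus \<nu> m ^^ j) (pconst c * p) = pconst c * (Kplus \<nu> m ^^ j) p"
  by (induction j) (simp_all add: Kplus_pconst_mult)

lemma Kminus_add: "Kminus m (p + q) = Kminus m p + Kminus m q"
  by (simp add: Kminus_def pderiv_add sum.distrib)

interpretation Kminus: additive "Kminus m" for m
  by standard (rule Kminus_add)

lemma Kminus_pconst_mult: "Kminus m (pconst c * p) = pconst c * Kminus m p"
  by (simp add: Kminus_def pderiv_pconst_mult sum_distrib_left)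

lemma Kminus_mult: "Kminus m (p * q) = Kminus m p * q + p * Kminus m q"
  by (simp add: Kminus_def pderiv_mult sum.distrib sum_distrib_left sum_distrib_right)

lemma Kminus_pconst [simp]: "Kminus m (pconst c) = 0"
  by (simp add: Kminus_def)

lemma Kminus_power_zero: "Kminus m q = 0 \<Longrightarrow> Kminus m (q ^ n) = 0"
  by (induction n) (simp_all add: Kminus_mult flip: pconst_1)

lemma Kminus_prod_zero: "(\<And>i. i \<in> I \<Longrightarrow> Kminus m (f i) = 0) \<Longrightarrow> Kminus m (prod f I) = 0"
  by (induction I rule: infinite_finite_induct) (simp_all add: Kminus_mult flip: pconst_1)

lemma hom_Kplus:
  assumes "p \<in> hom_polys m d"
  shows "Kplus \<nu> m p \<in> hom_polys m (Suc d)"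
  unfolding Kplus_def
proof (rule hom_sum)
  fix j assume j: "j \<in> {1..m}"
  have A: "pvar j ^ 2 * pderiv_var j p \<in> hom_polys m (Suc d)"
  proof (cases "d = 0")
    case True
    then show ?thesis using hom0_pderiv[of p m j] assms by simp
  next
    case False
    have "pvar j ^ 2 * pderiv_var j p \<in> hom_polys m (2 * 1 + (d - 1))"
      using j by (intro hom_mult hom_power hom_pvar hom_pderiv assms) auto
    then show ?thesis using False by (simp add: numeral_2_eq_2)
  qed
  have "pconst (2 * \<nu> j) * (pvar j * p) \<in> hom_polys m (1 + d)"
    using j by (intro hom_pconst_mult hom_mult hom_pvar assms) auto
  then have B: "pconst (2 * \<nu> j) * pvar j * p \<in> hom_polys m (Suc d)"
    by (simp add: mult.assoc)
  show "pvar j ^ 2 * pderiv_var j p + pconst (2 * \<nu> j) * pvar j * p \<in> hom_polys m (Suc d)"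
    using A B by (rule hom_add)
qed

lemma hom_Kpow: "p \<in> hom_polys m d \<Longrightarrow> (Kplus \<nu> m ^^ j) p \<in> hom_polys m (d + j)"
  by (induction j) (simp_all add: hom_Kplus)

lemma hom_Kminus: "p \<in> hom_polys m d \<Longrightarrow> Kminus m p \<in> hom_polys m (d - 1)"
  unfolding Kminus_def by (intro hom_sum hom_pderiv)

lemma hom0_Kminus: "p \<in> hom_polys m 0 \<Longrightarrow> Kminus m p = 0"
  unfolding Kminus_def by (simp add: hom0_pderiv)

lemma pderiv_pvar_sq: "pderiv_var i (pvar j ^ 2) = (if i = j then 2 * pvar j else 0)"
  by (simp add: power2_eq_square pderiv_mult pderiv_pvar)

lemma dKP:
  "pderiv_var i (pvar j ^ 2 * pderiv_var j p + pconst c * pvar j * p)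
   = (pvar j ^ 2 * pderiv_var j (pderiv_var i p) + pconst c * pvar j * pderiv_var i p)
     + (if i = j then 2 * pvar j * pderiv_var j p + pconst c * p else 0)"
proof -
  have "pderiv_var i (pvar j ^ 2 * pderiv_var j p + pconst c * pvar j * p)
     = pderiv_var i (pvar j ^ 2) * pderiv_var j p + pvar j ^ 2 * pderiv_var i (pderiv_var j p)
       + pconst c * (pderiv_var i (pvar j) * p + pvar j * pderiv_var i p)"
    by (simp add: pderiv_add pderiv_mult mult.assoc pderiv_pconst_mult)
  also have "\<dots> = (pvar j ^ 2 * pderiv_var j (pderiv_var i p) + pconst c * pvar j * pderiv_var i p)
     + (if i = j then 2 * pvar j * pderiv_var j p + pconst c * p else 0)"
    by (simp add: pderiv_pvar_sq pderiv_pvar pderiv_comm[of i j] algebra_simps)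
  finally show ?thesis .
qed

lemma commutator:
  assumes "p \<in> hom_polys m d"
  shows "Kminus m (Kplus \<nu> m p) = Kplus \<nu> m (Kminus m p) + pconst (2 * (of_nat d + (\<Sum>j=1..m. \<nu> j))) * p"
proof -
  let ?KP = "\<lambda>j q. pvar j ^ 2 * pderiv_var j q + pconst (2 * \<nu> j) * pvar j * q"
  let ?R = "\<lambda>i j. (if i = j then 2 * pvar j * pderiv_var j p + pconst (2 * \<nu> j) * p else 0)"
  have "Kminus m (Kplus \<nu> m p) = (\<Sum>i=1..m. \<Sum>j=1..m. pderiv_var i (?KP j p))"
    by (simp add: Kminus_def Kplus_def pderiv.sum)
  also have "\<dots> = (\<Sum>i=1..m. \<Sum>j=1..m. ?KP j (pderiv_var i p) + ?R i j)"
    by (simp only: dKP)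
  also have "\<dots> = (\<Sum>i=1..m. Kplus \<nu> m (pderiv_var i p)) + (\<Sum>i=1..m. \<Sum>j=1..m. ?R i j)"
    by (simp only: sum.distrib Kplus_def)
  also have "(\<Sum>i=1..m. Kplus \<nu> m (pderiv_var i p)) = Kplus \<nu> m (Kminus m p)"
    by (simp add: Kminus_def Kplus.sum)
  also have "(\<Sum>i=1..m. \<Sum>j=1..m. ?R i j) = (\<Sum>i=1..m. 2 * pvar i * pderiv_var i p + pconst (2 * \<nu> i) * p)"
    by (intro sum.cong refl) (simp add: sum.delta)
  also have "\<dots> = 2 * (\<Sum>i=1..m. pvar i * pderiv_var i p) + pconst (2 * (\<Sum>j=1..m. \<nu> j)) * p"
    by (simp add: sum.distrib sum_distrib_left sum_distrib_right pconst_sum mult.assoc)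
  also have "\<dots> = pconst (2 * (of_nat d + (\<Sum>j=1..m. \<nu> j))) * p"
    unfolding euler[OF assms] by (simp add: pconst_mult pconst_add pconst_numeral pconst_of_nat algebra_simps)
  finally show ?thesis .
qed


section \<open>The map CK and its inverse\<close>

definition ckv :: "nat \<Rightarrow> nat \<Rightarrow> rpoly" where
  "ckv m i = (if 1 \<le> i \<and> i \<le> m then pvar i - pvar (Suc m) else pvar i)"

lemma CK_Suc: "CK (Suc m) = psubst (ckv m)"
  by (intro ext) (simp add: CK_def ckv_def[abs_def])

lemma hom_pvar1: "1 \<le> i \<Longrightarrow> i \<le> m \<Longrightarrow> pvar i \<in> hom_polys m (Suc 0)"
  using hom_pvar by simp

definition Ev :: "nat \<Rightarrow> rpoly \<Rightarrow> rpoly" where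
  "Ev m = psubst (\<lambda>i. if i = Suc m then 0 else pvar i)"

lemma hom_CK:
  assumes "p \<in> hom_polys m d"
  shows "CK (Suc m) p \<in> hom_polys (Suc m) d"
  unfolding CK_Suc
  by (rule hom_psubst[OF _ assms]) (auto simp: ckv_def intro!: hom_diff hom_pvar1)

lemma Kminus_ckv:
  assumes "1 \<le> i" "i \<le> m"
  shows "Kminus (Suc m) (ckv m i) = 0"
proof -
  have "Kminus (Suc m) (ckv m i) = (\<Sum>j=1..Suc m. (if i = j then 1 else 0)) - (\<Sum>j=1..Suc m. (if Suc m = j then 1 else 0))"
    using assms by (simp add: ckv_def Kminus_def pderiv.diff pderiv_pvar sum_subtractf)
  also have "\<dots> = 0" using assms by (simp add: sum.delta)
  finally show ?thesis .
qed

lemma Kminus_CK: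
  assumes "p \<in> hom_polys m d"
  shows "Kminus (Suc m) (CK (Suc m) p) = 0"
proof -
  have "Kminus (Suc m) (pmono (ckv m) a) = 0" if "a \<in> keys p" for a
    unfolding pmono_def
  proof (rule Kminus_prod_zero, rule Kminus_power_zero)
    fix i assume "i \<in> keys a"
    then have "1 \<le> i" "i \<le> m" using homD(1)[OF assms that] by auto
    then show "Kminus (Suc m) (ckv m i) = 0" by (rule Kminus_ckv)
  qed
  then show ?thesis
    unfolding CK_Suc psubst_alt by (simp add: Kminus.sum Kminus_pconst_mult)
qed

lemma CK_harm: "p \<in> hom_polys m d \<Longrightarrow> CK (Suc m) p \<in> harm (Suc m) d"
  by (simp add: harm_def hom_CK Kminus_CK)

lemma Ev_CK:
  assumes "p \<in> hom_polys m d"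
  shows "Ev m (CK (Suc m) p) = p"
proof -
  have "Ev m (CK (Suc m) p) = psubst (\<lambda>i. Ev m (ckv m i)) p"
    unfolding CK_Suc Ev_def by (rule psubst_comp)
  also have "\<dots> = psubst pvar p"
  proof (rule psubst_cong)
    fix a i assume ai: "a \<in> keys p" "i \<in> keys a"
    then have "1 \<le> i" "i \<le> m" using homD(1)[OF assms ai(1)] by auto
    then show "Ev m (ckv m i) = pvar i"
      by (simp add: Ev_def ckv_def psubst.diff)
  qed
  finally show ?thesis by simp
qed

lemma hom_Ev:
  assumes "p \<in> hom_polys (Suc m) d"
  shows "Ev m p \<in> hom_polys m d"
  unfolding Ev_def
  by (rule hom_psubst[OF _ assms]) (auto intro: hom_pvar1)

lemma pmono_Ev:
  "pmono (\<lambda>i. if i = Suc m then 0 else pvar i) b = (if Suc m \<in> keys b then 0 else single b 1)"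
proof (cases "Suc m \<in> keys b")
  case True
  then have "lookup b (Suc m) \<noteq> 0" by (simp add: in_keys_iff)
  then show ?thesis using True unfolding pmono_def
    by (intro trans[OF prod_zero]) (auto intro!: bexI[of _ "Suc m"] simp: zero_power)
next
  case False
  have "pmono (\<lambda>i. if i = Suc m then 0 else pvar i) b = pmono pvar b"
    unfolding pmono_def using False by (intro prod.cong) auto
  then show ?thesis using False by (simp add: pmono_pvar)
qed

lemma lookup_Ev:
  assumes "lookup a (Suc m) = 0"
  shows "lookup (Ev m p) a = lookup p a"
proof -
  have "lookup (Ev m p) a = (\<Sum>b\<in>keys p. lookup (pconst (lookup p b) * pmono (\<lambda>i. if i = Suc m then 0 else pvar i) b) a)"
    by (simp add: Ev_def psubst_alt lookup_sum)
  also have "\<dots> = (\<Sum>b\<in>keys p. if b = a then lookup p a else 0)"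
  proof (intro sum.cong refl)
    fix b assume "b \<in> keys p"
    show "lookup (pconst (lookup p b) * pmono (\<lambda>i. if i = Suc m then 0 else pvar i) b) a
        = (if b = a then lookup p a else 0)"
      using assms by (auto simp: pmono_Ev lookup_pconst_mult lookup_single when_def in_keys_iff)
  qed
  also have "\<dots> = lookup p a"
    by (auto simp: in_keys_iff)
  finally show ?thesis .
qed

lemma Ev_zero_Kminus_zero:
  assumes K: "Kminus (Suc m) g = 0" and E: "Ev m g = 0"
  shows "g = 0"
proof (rule ccontr)
  assume "g \<noteq> 0"
  then have ne: "keys g \<noteq> {}" by simp
  define i0 where "i0 = Min ((\<lambda>a. lookup a (Suc m)) ` keys g)"
  have "i0 \<in> (\<lambda>a. lookup a (Suc m)) ` keys g"
    unfolding i0_def using ne by (intro Min_in) auto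
  then obtain a where a: "a \<in> keys g" "lookup a (Suc m) = i0" by auto
  have minim: "i0 \<le> lookup a' (Suc m)" if "a' \<in> keys g" for a'
    unfolding i0_def using that by (intro Min_le) auto
  have "i0 \<noteq> 0"
  proof
    assume "i0 = 0"
    then have "lookup g a = lookup (Ev m g) a" using a lookup_Ev[of a m g] by simp
    then show False using E a by (simp add: in_keys_iff)
  qed
  then have i1: "1 \<le> lookup a (Suc m)" using a by simp
  define b where "b = dn (Suc m) a"
  have ba: "b + single (Suc m) 1 = a" unfolding b_def using dn_plus[OF i1] .
  have lb: "lookup b (Suc m) = i0 - 1" unfolding b_def using a by (simp add: lookup_update)
  have "lookup (Kminus (Suc m) g) b = (\<Sum>j=1..Suc m. (of_nat (lookup b j) + 1) * lookup g (b + single j 1))"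
    by (simp add: Kminus_def lookup_sum lookup_pderiv lookup_add)
  also have "\<dots> = (\<Sum>j\<in>insert (Suc m) {1..m}. (of_nat (lookup b j) + 1) * lookup g (b + single j 1))"
    by (simp add: atLeastAtMostSuc_conv)
  also have "\<dots> = (of_nat (lookup b (Suc m)) + 1) * lookup g a + (\<Sum>j=1..m. (of_nat (lookup b j) + 1) * lookup g (b + single j 1))"
    using ba by (simp add: ba[unfolded One_nat_def])
  also have "(\<Sum>j=1..m. (of_nat (lookup b j) + 1) * lookup g (b + single j 1)) = 0"
  proof (intro sum.neutral ballI)
    fix j assume j: "j \<in> {1..m}"
    have "lookup (b + single j 1) (Suc m) = i0 - 1"
      using j lb by (simp add: lookup_add lookup_single when_def)
    then have "b + single j 1 \<notin> keys g" using minim \<open>i0 \<noteq> 0\<close> by force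
    then show "(of_nat (lookup b j) + 1) * lookup g (b + single j 1) = 0"
      by (simp add: in_keys_iff)
  qed
  finally have "lookup (Kminus (Suc m) g) b = (of_nat (lookup b (Suc m)) + 1) * lookup g a" by simp
  moreover have "(of_nat (lookup b (Suc m)) + 1) * lookup g a \<noteq> 0"
    using a by (simp add: in_keys_iff add_pos_nonneg)
  ultimately show False using K by simp
qed

lemma CK_surj:
  assumes "h \<in> harm (Suc m) d"
  shows "Ev m h \<in> hom_polys m d" "CK (Suc m) (Ev m h) = h"
proof -
  have hh: "h \<in> hom_polys (Suc m) d" "Kminus (Suc m) h = 0" using assms by (auto simp: harm_def)
  show he: "Ev m h \<in> hom_polys m d" by (rule hom_Ev[OF hh(1)])
  let ?g = "h - CK (Suc m) (Ev m h)"
  have "Kminus (Suc m) ?g = 0"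
    by (simp add: Kminus.diff hh(2) Kminus_CK[OF he])
  moreover have "Ev m ?g = 0"
    by (simp add: Ev_def psubst.diff) (simp add: Ev_def[symmetric] Ev_CK[OF he])
  ultimately have "?g = 0" by (rule Ev_zero_Kminus_zero)
  then show "CK (Suc m) (Ev m h) = h" by simp
qed

lemma CK_inj:
  assumes "p \<in> hom_polys m d" "CK (Suc m) p = 0"
  shows "p = 0"
  using Ev_CK[OF assms(1)] assms(2) by (simp add: Ev_def psubst.zero)

lemma CK_sum: "CK (Suc m) (sum f I) = (\<Sum>i\<in>I. CK (Suc m) (f i))"
  by (simp add: CK_Suc psubst.sum)

lemma CK_pconst_mult: "CK (Suc m) (pconst c * p) = pconst c * CK (Suc m) p"
  by (simp add: CK_Suc psubst_pconst_mult)


section \<open>Fischer decomposition\<close>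

lemma harm_pconst_mult: "h \<in> harm m d \<Longrightarrow> pconst c * h \<in> harm m d"
  by (simp add: harm_def hom_pconst_mult Kminus_pconst_mult)

lemma harm_zero [simp]: "0 \<in> harm m d"
  by (simp add: harm_def Kminus.zero)

lemma harm_add: "h \<in> harm m d \<Longrightarrow> g \<in> harm m d \<Longrightarrow> h + g \<in> harm m d"
  by (simp add: harm_def hom_add Kminus_add)

definition gam :: "(nat \<Rightarrow> real) \<Rightarrow> nat \<Rightarrow> nat \<Rightarrow> nat \<Rightarrow> real" where
  "gam \<nu> m e j = (\<Sum>i<j. 2 * (real e + real i + (\<Sum>l=1..m. \<nu> l)))"

lemma gam_pos:
  assumes "(\<Sum>l=1..m. \<nu> l) > 0" "1 \<le> j"
  shows "gam \<nu> m e j > 0"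
  unfolding gam_def using assms
  by (intro sum_pos) (auto simp: lessThan_empty_iff intro!: mult_pos_pos add_nonneg_pos)

lemma gam_0 [simp]: "gam \<nu> m e 0 = 0"
  by (simp add: gam_def)

lemma KK:
  assumes "h \<in> harm m e"
  shows "Kminus m ((Kplus \<nu> m ^^ j) h) = pconst (gam \<nu> m e j) * (Kplus \<nu> m ^^ (j - 1)) h"
proof (induction j)
  case 0
  then show ?case using assms by (simp add: harm_def gam_def)
next
  case (Suc j)
  have hj: "(Kplus \<nu> m ^^ j) h \<in> hom_polys m (e + j)"
    using assms by (intro hom_Kpow) (simp add: harm_def)
  have a: "pconst (gam \<nu> m e j) * Kplus \<nu> m ((Kplus \<nu> m ^^ (j - 1)) h)
         = pconst (gam \<nu> m e j) * (Kplus \<nu> m ^^ j) h"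
  proof (cases j)
    case 0
    then show ?thesis by (simp add: gam_def)
  next
    case (Suc i)
    then show ?thesis by simp
  qed
  have "Kminus m ((Kplus \<nu> m ^^ Suc j) h) = Kminus m (Kplus \<nu> m ((Kplus \<nu> m ^^ j) h))"
    by simp
  also have "\<dots> = Kplus \<nu> m (Kminus m ((Kplus \<nu> m ^^ j) h))
      + pconst (2 * (of_nat (e + j) + (\<Sum>l=1..m. \<nu> l))) * (Kplus \<nu> m ^^ j) h"
    by (rule commutator[OF hj])
  also have "\<dots> = pconst (gam \<nu> m e j) * (Kplus \<nu> m ^^ j) h
      + pconst (2 * (of_nat (e + j) + (\<Sum>l=1..m. \<nu> l))) * (Kplus \<nu> m ^^ j) h"
    by (simp only: Suc.IH Kplus_pconst_mult a)
  also have "\<dots> = pconst (gam \<nu> m e (Suc j)) * (Kplus \<nu> m ^^ (Suc j - 1)) h"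
  proof -
    have g: "gam \<nu> m e (Suc j) = gam \<nu> m e j + 2 * (of_nat (e + j) + (\<Sum>l=1..m. \<nu> l))"
      by (simp add: gam_def)
    show ?thesis by (simp only: g pconst_add distrib_right diff_Suc_1)
  qed
  finally show ?case .
qed

lemma fischer_indep:
  assumes pos: "(\<Sum>l=1..m. \<nu> l) > 0"
  shows "(\<And>j. j \<le> J \<Longrightarrow> h j \<in> harm m (e j)) \<Longrightarrow> (\<Sum>j\<le>J. (Kplus \<nu> m ^^ j) (h j)) = 0
    \<Longrightarrow> (\<forall>j\<le>J. h j = 0)"
proof (induction J arbitrary: h e)
  case 0
  then show ?case by simp
next
  case (Suc J)
  have "0 = Kminus m (\<Sum>j\<le>Suc J. (Kplus \<nu> m ^^ j) (h j))"
    using Suc.prems(2) by (simp add: Kminus.zero)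
  also have "\<dots> = (\<Sum>j\<le>Suc J. pconst (gam \<nu> m (e j) j) * (Kplus \<nu> m ^^ (j - 1)) (h j))"
    unfolding Kminus.sum by (intro sum.cong refl KK Suc.prems(1)) simp
  also have "\<dots> = (\<Sum>i\<le>J. pconst (gam \<nu> m (e (Suc i)) (Suc i)) * (Kplus \<nu> m ^^ i) (h (Suc i)))"
    by (simp only: sum.atMost_Suc_shift) simp
  also have "\<dots> = (\<Sum>i\<le>J. (Kplus \<nu> m ^^ i) (pconst (gam \<nu> m (e (Suc i)) (Suc i)) * h (Suc i)))"
    by (simp add: Kpow_pconst_mult)
  finally have z: "(\<Sum>i\<le>J. (Kplus \<nu> m ^^ i) (pconst (gam \<nu> m (e (Suc i)) (Suc i)) * h (Suc i))) = 0"
    by simp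
  have "\<forall>i\<le>J. pconst (gam \<nu> m (e (Suc i)) (Suc i)) * h (Suc i) = 0"
    by (rule Suc.IH[where e = "\<lambda>i. e (Suc i)", OF _ z]) (simp add: Suc.prems(1) harm_pconst_mult)
  note hz = this
  have hs: "\<forall>i\<le>J. h (Suc i) = 0"
  proof (intro allI impI)
    fix i assume "i \<le> J"
    with hz have "pconst (gam \<nu> m (e (Suc i)) (Suc i)) * h (Suc i) = 0" by blast
    moreover have "gam \<nu> m (e (Suc i)) (Suc i) \<noteq> 0" using gam_pos[OF pos, of "Suc i" "e (Suc i)"] by simp
    ultimately show "h (Suc i) = 0" by (simp add: pconst_mult_eq0)
  qed
  have "(\<Sum>i\<le>J. (Kplus \<nu> m ^^ Suc i) (h (Suc i))) = 0"
    using hs by (simp add: Kpow.zero Kplus.zero)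
  moreover have "(\<Sum>j\<le>Suc J. (Kplus \<nu> m ^^ j) (h j)) = h 0 + (\<Sum>i\<le>J. (Kplus \<nu> m ^^ Suc i) (h (Suc i)))"
    by (simp only: sum.atMost_Suc_shift) simp
  ultimately have "h 0 = 0"
    using Suc.prems(2) by simp
  show ?case
  proof (intro allI impI)
    fix j assume "j \<le> Suc J"
    then show "h j = 0" using hs \<open>h 0 = 0\<close> by (cases j) auto
  qed
qed

lemma fischer_span:
  assumes pos: "(\<Sum>l=1..m. \<nu> l) > 0"
  shows "p \<in> hom_polys m k \<Longrightarrow> \<exists>h. (\<forall>j\<le>k. h j \<in> harm m (k - j)) \<and> p = (\<Sum>j\<le>k. (Kplus \<nu> m ^^ j) (h j))"
proof (induction k arbitrary: p)
  case 0
  then show ?case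
    by (intro exI[of _ "\<lambda>_. p"]) (simp add: harm_def hom0_Kminus)
next
  case (Suc k)
  have q: "Kminus m p \<in> hom_polys m k"
    using hom_Kminus[OF Suc.prems] by simp
  obtain g where g: "\<And>j. j \<le> k \<Longrightarrow> g j \<in> harm m (k - j)"
    and qe: "Kminus m p = (\<Sum>j\<le>k. (Kplus \<nu> m ^^ j) (g j))"
    using Suc.IH[OF q] by blast
  define c where "c j = 1 / gam \<nu> m (k - j) (Suc j)" for j
  define r where "r = (\<Sum>j\<le>k. (Kplus \<nu> m ^^ Suc j) (pconst (c j) * g j))"
  have gc: "gam \<nu> m (k - j) (Suc j) * c j = 1" for j
    unfolding c_def using gam_pos[OF pos, of "Suc j" "k - j"] by simp
  have "Kminus m r = (\<Sum>j\<le>k. pconst (gam \<nu> m (k - j) (Suc j)) * (Kplus \<nu> m ^^ j) (pconst (c j) * g j))"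
    unfolding r_def Kminus.sum
    by (intro sum.cong refl, subst KK[where e = "k - _"]) (auto intro: harm_pconst_mult g)
  also have "\<dots> = (\<Sum>j\<le>k. (Kplus \<nu> m ^^ j) (g j))"
    by (simp add: Kpow_pconst_mult mult.assoc[symmetric] pconst_mult[symmetric] gc)
  finally have Kr: "Kminus m r = Kminus m p" using qe by simp
  have rh: "r \<in> hom_polys m (Suc k)"
    unfolding r_def
  proof (rule hom_sum)
    fix j assume "j \<in> {..k}"
    then have "(Kplus \<nu> m ^^ Suc j) (pconst (c j) * g j) \<in> hom_polys m (k - j + Suc j)"
      using g by (intro hom_Kpow hom_pconst_mult) (auto simp: harm_def)
    then show "(Kplus \<nu> m ^^ Suc j) (pconst (c j) * g j) \<in> hom_polys m (Suc k)"
      using \<open>j \<in> {..k}\<close> by simp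
  qed
  define h where "h j = (if j = 0 then p - r else pconst (c (j - 1)) * g (j - 1))" for j
  have "\<forall>j\<le>Suc k. h j \<in> harm m (Suc k - j)"
  proof (intro allI impI)
    fix j assume j: "j \<le> Suc k"
    show "h j \<in> harm m (Suc k - j)"
    proof (cases j)
      case 0
      then show ?thesis using Suc.prems rh Kr
        by (simp add: h_def harm_def hom_diff Kminus.diff)
    next
      case (Suc i)
      then show ?thesis using j g[of i] by (simp add: h_def harm_pconst_mult)
    qed
  qed
  moreover have "p = (\<Sum>j\<le>Suc k. (Kplus \<nu> m ^^ j) (h j))"
    unfolding sum.atMost_Suc_shift h_def r_def by simp
  ultimately show ?case by blast
qed


definition Bs :: "nat \<Rightarrow> nat \<Rightarrow> nat list set" where
  "Bs m k = {js. length js = m \<and> sum_list js = k}"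

lemma finite_Bs: "finite (Bs m k)"
proof -
  have "Bs m k \<subseteq> {xs. set xs \<subseteq> {0..k} \<and> length xs = m}"
    by (auto simp: Bs_def dest: member_le_sum_list)
  moreover have "finite {xs. set xs \<subseteq> {0..k} \<and> length xs = m}"
    by (rule finite_lists_length_eq) simp
  ultimately show ?thesis by (rule finite_subset)
qed

lemma Bs_1: "Bs (Suc 0) k = {[k]}"
  by (auto simp: Bs_def length_Suc_conv)

lemma Bs_Suc: "Bs (Suc m) k = (\<lambda>(j, js). js @ [j]) ` (SIGMA j:{..k}. Bs m (k - j))"
proof
  show "Bs (Suc m) k \<subseteq> (\<lambda>(j, js). js @ [j]) ` (SIGMA j:{..k}. Bs m (k - j))"
  proof
    fix t assume t: "t \<in> Bs (Suc m) k"
    then have "t \<noteq> []" by (auto simp: Bs_def)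
    then have te: "t = butlast t @ [last t]" by simp
    have "sum_list t = sum_list (butlast t) + last t"
      by (subst te) simp
    then have "last t \<le> k" "butlast t \<in> Bs m (k - last t)"
      using t by (auto simp: Bs_def)
    then show "t \<in> (\<lambda>(j, js). js @ [j]) ` (SIGMA j:{..k}. Bs m (k - j))"
      using te by (intro image_eqI[of _ _ "(last t, butlast t)"]) auto
  qed
next
  show "(\<lambda>(j, js). js @ [j]) ` (SIGMA j:{..k}. Bs m (k - j)) \<subseteq> Bs (Suc m) k"
    by (auto simp: Bs_def)
qed

lemma Bs_SucE:
  assumes "t \<in> Bs (Suc m) k"
  shows "\<exists>j js. t = js @ [j] \<and> j \<le> k \<and> js \<in> Bs m (k - j)"
  using assms Bs_Suc[of m k] by auto

lemma sum_Bs_Suc: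
  "(\<Sum>t\<in>Bs (Suc m) k. f t) = (\<Sum>j\<le>k. \<Sum>js\<in>Bs m (k - j). f (js @ [j]))"
proof -
  have inj: "inj_on (\<lambda>(j, js). js @ [j]) (SIGMA j:{..k}. Bs m (k - j))"
    by (auto simp: inj_on_def)
  have "(\<Sum>t\<in>Bs (Suc m) k. f t) = (\<Sum>x\<in>(SIGMA j:{..k}. Bs m (k - j)). f ((\<lambda>(j, js). js @ [j]) x))"
    unfolding Bs_Suc by (rule sum.reindex[OF inj, unfolded comp_def])
  also have "\<dots> = (\<Sum>(j, js)\<in>(SIGMA j:{..k}. Bs m (k - j)). f (js @ [j]))"
    by (rule sum.cong) auto
  also have "\<dots> = (\<Sum>j\<le>k. \<Sum>js\<in>Bs m (k - j). f (js @ [j]))"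
    by (rule sum.Sigma[symmetric]) (auto simp: finite_Bs)
  finally show ?thesis .
qed

lemma stage_append: "r < length js \<Longrightarrow> stage \<nu> (js @ ys) r = stage \<nu> js r"
  by (induction r) (simp_all add: nth_append)

lemma stage_snoc:
  assumes "length js = Suc r"
  shows "stage \<nu> (js @ [j]) (Suc r) = (Kplus \<nu> (Suc (Suc r)) ^^ j) (CK (Suc (Suc r)) (stage \<nu> js r))"
  using assms by (simp add: stage_append nth_append)

lemma main:
  assumes pos: "\<And>M. 1 \<le> M \<Longrightarrow> M \<le> Suc m \<Longrightarrow> (\<Sum>l=1..M. \<nu> l) > 0"
  shows "(\<forall>js\<in>Bs (Suc m) k. stage \<nu> js m \<in> hom_polys (Suc m) k)
    \<and> (\<forall>c. (\<Sum>js\<in>Bs (Suc m) k. pconst (c js) * stage \<nu> js m) = 0 \<longrightarrow> (\<forall>js\<in>Bs (Suc m) k. c js = 0))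
    \<and> (\<forall>p\<in>hom_polys (Suc m) k. \<exists>c. p = (\<Sum>js\<in>Bs (Suc m) k. pconst (c js) * stage \<nu> js m))"
  using pos
proof (induction m arbitrary: k)
  case 0
  have x1: "pvar 1 ^ k = single (single 1 k) 1" by (rule pvar_power)
  have hom: "pvar 1 ^ k \<in> hom_polys (Suc 0) k"
    using hom_power[OF hom_pvar[of 1 1], of k] by simp
  have "lookup (pvar 1 ^ k) (single 1 k) = 1" unfolding x1 by simp
  then have nz: "pvar 1 ^ k \<noteq> 0" by (metis lookup_zero zero_neq_one)
  have ind: "pconst c * pvar 1 ^ k = 0 \<Longrightarrow> c = 0" for c
    using nz pconst_mult_eq0[of c "pvar 1 ^ k"] by blast
  have span: "p = pconst (lookup p (single 1 k)) * pvar 1 ^ k" if p: "p \<in> hom_polys (Suc 0) k" for p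
  proof -
    have "keys p \<subseteq> {single 1 k}"
    proof
      fix a assume a: "a \<in> keys p"
      have ka: "keys a \<subseteq> {1}" "mdeg a = k" using homD[OF p a] by auto
      have "mdeg a = lookup a 1" using mdeg_superset[of "{1}" a] ka by simp
      then have "a = single 1 k"
        using ka by (intro poly_mapping_eqI) (auto simp: lookup_single when_def in_keys_iff)
      then show "a \<in> {single 1 k}" by simp
    qed
    then have "p = (\<Sum>a\<in>{single 1 k}. single a (lookup p a))"
      by (intro poly_expand_superset) auto
    then show ?thesis unfolding x1 pconst_mult_single by simp
  qed
  have s3: "\<forall>p\<in>hom_polys (Suc 0) k. \<exists>c. p = (\<Sum>js\<in>Bs (Suc 0) k. pconst (c js) * stage \<nu> js 0)"
  proof
    fix p assume "p \<in> hom_polys (Suc 0) k"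
    then have "p = (\<Sum>js\<in>Bs (Suc 0) k. pconst ((\<lambda>_. lookup p (single 1 k)) js) * stage \<nu> js 0)"
      using span by (simp add: Bs_1)
    then show "\<exists>c. p = (\<Sum>js\<in>Bs (Suc 0) k. pconst (c js) * stage \<nu> js 0)"
      by (intro exI[where x = "\<lambda>_. lookup p (single 1 k)"])
  qed
  show ?case
    using hom ind s3 by (simp add: Bs_1)
next
  case (Suc m)
  let ?M = "Suc (Suc m)"
  let ?F = "\<lambda>js. stage \<nu> js m"
  let ?G = "\<lambda>js. stage \<nu> js (Suc m)"
  have IH: "(\<forall>js\<in>Bs (Suc m) k'. ?F js \<in> hom_polys (Suc m) k')
    \<and> (\<forall>c. (\<Sum>js\<in>Bs (Suc m) k'. pconst (c js) * ?F js) = 0 \<longrightarrow> (\<forall>js\<in>Bs (Suc m) k'. c js = 0))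
    \<and> (\<forall>p\<in>hom_polys (Suc m) k'. \<exists>c. p = (\<Sum>js\<in>Bs (Suc m) k'. pconst (c js) * ?F js))" for k'
    using Suc.prems by (intro Suc.IH) auto
  have posM: "(\<Sum>l=1..?M. \<nu> l) > 0" using Suc.prems[of ?M] by simp
  have G: "?G (js @ [j]) = (Kplus \<nu> ?M ^^ j) (CK ?M (?F js))" if "js \<in> Bs (Suc m) k'" for js j k'
    using that by (intro stage_snoc) (simp add: Bs_def)
  have lin: "(\<Sum>js\<in>Bs (Suc m) (k - j). pconst (c js) * ?G (js @ [j]))
       = (Kplus \<nu> ?M ^^ j) (CK ?M (\<Sum>js\<in>Bs (Suc m) (k - j). pconst (c js) * ?F js))" for c j
  proof -
    have "(\<Sum>js\<in>Bs (Suc m) (k - j). pconst (c js) * ?G (js @ [j]))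
       = (\<Sum>js\<in>Bs (Suc m) (k - j). pconst (c js) * (Kplus \<nu> ?M ^^ j) (CK ?M (?F js)))"
      by (intro sum.cong refl) (simp only: G)
    then show ?thesis
      by (simp only: CK_sum CK_pconst_mult Kpow.sum Kpow_pconst_mult)
  qed
  have homsum: "(\<Sum>js\<in>Bs (Suc m) k'. pconst (c js) * ?F js) \<in> hom_polys (Suc m) k'" for c k'
    using IH[of k'] by (intro hom_sum hom_pconst_mult) auto
  have part1: "\<forall>t\<in>Bs ?M k. ?G t \<in> hom_polys ?M k"
  proof
    fix t assume "t \<in> Bs ?M k"
    then obtain j js where t: "t = js @ [j]" "j \<le> k" "js \<in> Bs (Suc m) (k - j)"
      using Bs_SucE by blast
    have "(Kplus \<nu> ?M ^^ j) (CK ?M (?F js)) \<in> hom_polys ?M (k - j + j)"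
      using IH t(3) by (intro hom_Kpow hom_CK) auto
    then show "?G t \<in> hom_polys ?M k" using t G by simp
  qed
  have part2: "\<forall>c. (\<Sum>t\<in>Bs ?M k. pconst (c t) * ?G t) = 0 \<longrightarrow> (\<forall>t\<in>Bs ?M k. c t = 0)"
  proof (intro allI impI)
    fix c assume z: "(\<Sum>t\<in>Bs ?M k. pconst (c t) * ?G t) = 0"
    define h where "h j = CK ?M (\<Sum>js\<in>Bs (Suc m) (k - j). pconst (c (js @ [j])) * ?F js)" for j
    have sz: "(\<Sum>j\<le>k. (Kplus \<nu> ?M ^^ j) (h j)) = 0"
      using z unfolding sum_Bs_Suc[where m = "Suc m" and k = k] h_def
      by (subst (asm) sum.cong[OF refl lin]) simp_all
    have hharm: "\<And>j. j \<le> k \<Longrightarrow> h j \<in> harm ?M (k - j)"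
      by (simp add: h_def CK_harm homsum)
    have hz: "\<forall>j\<le>k. h j = 0"
      by (rule fischer_indep[OF posM hharm sz])
    show "\<forall>t\<in>Bs ?M k. c t = 0"
    proof
      fix t assume "t \<in> Bs ?M k"
      then obtain j js where t: "t = js @ [j]" "j \<le> k" "js \<in> Bs (Suc m) (k - j)"
        using Bs_SucE by blast
      have "(\<Sum>js\<in>Bs (Suc m) (k - j). pconst (c (js @ [j])) * ?F js) = 0"
        using hz t(2) by (intro CK_inj[OF homsum]) (simp add: h_def)
      then show "c t = 0" using IH[of "k - j"] t by auto
    qed
  qed
  have part3: "\<forall>p\<in>hom_polys ?M k. \<exists>c. p = (\<Sum>t\<in>Bs ?M k. pconst (c t) * ?G t)"
  proof
    fix p assume p: "p \<in> hom_polys ?M k"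
    obtain h where h: "\<forall>j\<le>k. h j \<in> harm ?M (k - j)" and pe: "p = (\<Sum>j\<le>k. (Kplus \<nu> ?M ^^ j) (h j))"
      using fischer_span[OF posM p] by blast
    have "\<forall>j. \<exists>cj. j \<le> k \<longrightarrow> Ev (Suc m) (h j) = (\<Sum>js\<in>Bs (Suc m) (k - j). pconst (cj js) * ?F js)"
      using IH h CK_surj(1) by blast
    then obtain C where C: "\<And>j. j \<le> k \<Longrightarrow> Ev (Suc m) (h j) = (\<Sum>js\<in>Bs (Suc m) (k - j). pconst (C j js) * ?F js)"
      by metis
    define c where "c t = C (last t) (butlast t)" for t
    have "(\<Sum>t\<in>Bs ?M k. pconst (c t) * ?G t) = (\<Sum>j\<le>k. (Kplus \<nu> ?M ^^ j) (CK ?M (\<Sum>js\<in>Bs (Suc m) (k - j). pconst (C j js) * ?F js)))"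
      unfolding sum_Bs_Suc[where m = "Suc m" and k = k] c_def
      by (intro sum.cong refl) (simp only: last_snoc butlast_snoc lin)
    also have "\<dots> = (\<Sum>j\<le>k. (Kplus \<nu> ?M ^^ j) (h j))"
    proof (intro sum.cong refl)
      fix j assume j: "j \<in> {..k}"
      then have hj: "h j \<in> harm ?M (k - j)" using h by simp
      show "(Kplus \<nu> ?M ^^ j) (CK ?M (\<Sum>js\<in>Bs (Suc m) (k - j). pconst (C j js) * ?F js)) = (Kplus \<nu> ?M ^^ j) (h j)"
        using j by (simp add: C[symmetric] CK_surj(2)[OF hj])
    qed
    finally show "\<exists>c. p = (\<Sum>t\<in>Bs ?M k. pconst (c t) * ?G t)" using pe by metis
  qed
  show ?case using part1 part2 part3 by blast
qed


interpretation M: module pscale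
  by standard (simp_all add: pscale_eq pconst_add pconst_mult algebra_simps)

lemma sum_indicator_pconst:
  assumes "finite T" "a \<in> T"
  shows "(\<Sum>t\<in>T. pconst (if t = a then 1 else 0) * f t) = f a"
proof -
  have "(\<Sum>t\<in>T. pconst (if t = a then 1 else 0) * f t) = (\<Sum>t\<in>T. if t = a then f t else 0)"
    by (intro sum.cong refl) simp
  also have "\<dots> = f a" using assms by simp
  finally show ?thesis .
qed

theorem theorem3p3:
  fixes n k :: nat and \<nu> :: "nat \<Rightarrow> real"
  assumes "n \<ge> 2"
    and "\<And>j. 1 \<le> j \<Longrightarrow> j \<le> n \<Longrightarrow> \<nu> j > 0"
  defines "T \<equiv> {js :: nat list. length js = n - 1 \<and> sum_list js = k}"
  shows "inj_on (psi \<nu> n) T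
    \<and> \<not> module.dependent pscale (psi \<nu> n ` T)
    \<and> module.span pscale (psi \<nu> n ` T) = harm n k"
proof -
  obtain m where n: "n = Suc (Suc m)"
    using assms(1) by (metis add_2_eq_Suc le_Suc_ex)
  have TB: "T = Bs (Suc m) k" by (simp add: T_def Bs_def n)
  have fin: "finite T" unfolding TB by (rule finite_Bs)
  have pos: "(\<Sum>l=1..M. \<nu> l) > 0" if "1 \<le> M" "M \<le> Suc m" for M
    using that assms(2) n by (intro sum_pos) auto
  note mn = main[OF pos, of m k]
  let ?F = "\<lambda>js. stage \<nu> js m"
  let ?P = "psi \<nu> n"
  have psi: "?P js = CK (Suc (Suc m)) (?F js)" for js
    by (simp add: psi_def n)
  have Fh: "\<forall>js\<in>T. ?F js \<in> hom_polys (Suc m) k" using mn TB by blast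
  have Find: "\<And>c. (\<Sum>js\<in>T. pconst (c js) * ?F js) = 0 \<Longrightarrow> \<forall>js\<in>T. c js = 0"
    using mn TB by blast
  have Fspan: "\<And>p. p \<in> hom_polys (Suc m) k \<Longrightarrow> \<exists>c. p = (\<Sum>js\<in>T. pconst (c js) * ?F js)"
    using mn TB by blast
  have ind: "\<forall>js\<in>T. c js = 0" if z: "(\<Sum>js\<in>T. pconst (c js) * ?P js) = 0" for c
  proof -
    have hs: "(\<Sum>js\<in>T. pconst (c js) * ?F js) \<in> hom_polys (Suc m) k"
      using Fh by (intro hom_sum hom_pconst_mult) auto
    have "CK (Suc (Suc m)) (\<Sum>js\<in>T. pconst (c js) * ?F js) = 0"
      using z by (simp add: psi CK_sum CK_pconst_mult)
    then have "(\<Sum>js\<in>T. pconst (c js) * ?F js) = 0" by (rule CK_inj[OF hs])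
    then show ?thesis by (rule Find)
  qed
  have inj: "inj_on ?P T"
  proof (rule inj_onI)
    fix a b assume a: "a \<in> T" and b: "b \<in> T" and e: "?P a = ?P b"
    show "a = b"
    proof (rule ccontr)
      assume ab: "a \<noteq> b"
      define c where "c t = (if t = a then 1 else 0) - (if t = b then 1 else (0::real))" for t
      have "(\<Sum>t\<in>T. pconst (c t) * ?P t)
          = (\<Sum>t\<in>T. pconst (if t = a then 1 else 0) * ?P t) - (\<Sum>t\<in>T. pconst (if t = b then 1 else 0) * ?P t)"
        by (simp add: c_def pconst_diff left_diff_distrib sum_subtractf)
      also have "\<dots> = ?P a - ?P b"
        using fin a b by (simp only: sum_indicator_pconst)
      also have "\<dots> = 0" using e by simp
      finally have "\<forall>t\<in>T. c t = 0" by (rule ind)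
      then have "c a = 0" using a by blast
      then show False using ab by (simp add: c_def)
    qed
  qed
  have indep: "\<not> M.dependent (?P ` T)"
  proof
    assume "M.dependent (?P ` T)"
    then obtain t u v where t: "finite t" "t \<subseteq> ?P ` T" "(\<Sum>v\<in>t. pscale (u v) v) = 0"
      and v: "v \<in> t" "u v \<noteq> 0"
      unfolding M.dependent_explicit by blast
    define S where "S = {js\<in>T. ?P js \<in> t}"
    define c where "c js = (if ?P js \<in> t then u (?P js) else 0)" for js
    have "(\<Sum>js\<in>T. pconst (c js) * ?P js) = (\<Sum>js\<in>S. pconst (c js) * ?P js)"
      by (rule sum.mono_neutral_right) (auto simp: fin S_def c_def)
    also have "\<dots> = (\<Sum>js\<in>S. pconst (u (?P js)) * ?P js)"
      by (intro sum.cong refl) (simp add: S_def c_def)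
    also have "\<dots> = (\<Sum>v\<in>?P ` S. pconst (u v) * v)"
    proof (rule sum.reindex[symmetric, unfolded comp_def])
      show "inj_on ?P S" using inj by (rule inj_on_subset) (auto simp: S_def)
    qed
    also have "?P ` S = t" using t(2) by (auto simp: S_def)
    also have "(\<Sum>v\<in>t. pconst (u v) * v) = 0" using t(3) by (simp add: pscale_eq)
    finally have "\<forall>js\<in>T. c js = 0" by (rule ind)
    moreover obtain js0 where "js0 \<in> T" "v = ?P js0" using v t(2) by blast
    ultimately show False using v by (auto simp: c_def)
  qed
  have span: "M.span (?P ` T) = harm n k"
  proof
    show "M.span (?P ` T) \<subseteq> harm n k"
    proof (rule M.span_minimal)
      show "?P ` T \<subseteq> harm n k"
      proof
        fix x assume "x \<in> ?P ` T"
        then obtain js where js: "js \<in> T" "x = ?P js" by blast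
        have "CK (Suc (Suc m)) (?F js) \<in> harm (Suc (Suc m)) k"
          using Fh js(1) by (intro CK_harm) auto
        then show "x \<in> harm n k" using js(2) psi[of js] n by simp
      qed
      show "M.subspace (harm n k)"
        by (rule M.subspaceI) (auto simp: pscale_eq harm_add harm_pconst_mult)
    qed
    show "harm n k \<subseteq> M.span (?P ` T)"
    proof
      fix h assume "h \<in> harm n k"
      then have h: "h \<in> harm (Suc (Suc m)) k" by (simp add: n)
      obtain c where c: "Ev (Suc m) h = (\<Sum>js\<in>T. pconst (c js) * ?F js)"
        using Fspan[OF CK_surj(1)[OF h]] by blast
      have "h = CK (Suc (Suc m)) (Ev (Suc m) h)" using CK_surj(2)[OF h] by simp
      also have "\<dots> = (\<Sum>js\<in>T. pscale (c js) (?P js))"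
        by (simp add: c CK_sum CK_pconst_mult psi pscale_eq)
      also have "\<dots> \<in> M.span (?P ` T)"
        by (intro M.span_sum M.span_scale M.span_base) auto
      finally show "h \<in> M.span (?P ` T)" .
    qed
  qed
  show ?thesis using inj indep span by blast
qed

end
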